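(* Let $A\in M_n(\mathbb{C})$, $x\in\mathbb{C}S^n$, and let $B_r$ be a ball of radius $r>0$ centered at $x$ in $\mathbb{C}^n$. Then $f_A(\mathbb{C}S^n\cap B_r)$ is a convex subset of $\mathbb{C}$.
   Context: $\mathbb{C}S^n$ is the unit sphere of $\mathbb{C}^n$ and $f_A(y)=y^*Ay$. *)

theory Defs
  imports "HOL-Analysis.Analysis"
begin

definition csphere :: "(complex ^ 'n) set" where
  "csphere = {y. norm y = 1}"

definition fA :: "complex ^ 'n ^ 'n \<Rightarrow> complex ^ 'n \<Rightarrow> complex" where
  "fA A y = (\<Sum>i\<in>UNIV. cnj (y $ i) * ((A *v y) $ i))"

end

theory Submission imports Defs begin

definition h :: "complex^'n \<Rightarrow> complex^'n \<Rightarrow> complex" where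
  "h u v = (\<Sum>i\<in>UNIV. cnj (u $ i) * v $ i)"

definition lin :: "complex \<Rightarrow> complex^'n \<Rightarrow> complex \<Rightarrow> complex^'n \<Rightarrow> complex^'n" where
  "lin z1 u z2 v = (\<chi> i. z1 * u $ i + z2 * v $ i)"

lemma h_inner: "Re (h u v) = inner u v"
  by (simp add: h_def inner_vec_def inner_complex_def Re_sum)

lemma h_cnj: "h v u = cnj (h u v)"
  by (simp add: h_def mult.commute)

lemma h_self: "h y y = complex_of_real ((norm y)^2)"
proof -
  have "Im (h y y) = 0" by (simp add: h_def Im_sum)
  moreover have "Re (h y y) = (norm y)^2" by (simp add: h_inner power2_norm_eq_inner)
  ultimately show ?thesis by (simp add: complex_eq_iff)
qed

lemma h_lin_left: "h (lin z1 u z2 v) w = cnj z1 * h u w + cnj z2 * h v w"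
  by (simp add: h_def lin_def sum_distrib_left sum.distrib algebra_simps)

lemma h_lin_right: "h w (lin z1 u z2 v) = z1 * h w u + z2 * h w v"
  by (simp add: h_def lin_def sum_distrib_left sum.distrib algebra_simps)

lemma mv_lin: "A *v lin z1 u z2 v = lin z1 (A *v u) z2 (A *v v)"
  by (simp add: vec_eq_iff lin_def matrix_vector_mult_def sum_distrib_left sum.distrib algebra_simps)

lemma fA_h: "fA A y = h y (A *v y)"
  by (simp add: fA_def h_def)

lemma fA_lin: "fA A (lin z1 u z2 v) = cnj z1 * z1 * fA A u + cnj z1 * z2 * h u (A *v v)
   + cnj z2 * z1 * h v (A *v u) + cnj z2 * z2 * fA A v"
  by (simp add: fA_h mv_lin h_lin_left h_lin_right algebra_simps)

lemma hh_lin: "h (lin z1 u z2 v) (lin z1 u z2 v) = cnj z1 * z1 * h u u + cnj z1 * z2 * h u v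
   + cnj z2 * z1 * h v u + cnj z2 * z2 * h v v"
  by (simp add: h_lin_left h_lin_right algebra_simps)

lemma normsq_diff: "(norm (x - y))^2 = (norm x)^2 + (norm y)^2 - 2 * Re (h x y)"
  by (simp add: h_inner power2_norm_eq_inner inner_diff_left inner_diff_right inner_commute)


lemma cnj_mult_self: "cnj z * z = complex_of_real ((cmod z)^2)"
  using complex_norm_square[of z] by (simp add: mult.commute)

lemma core_indep:
  fixes A :: "complex^'n^'n" and x u v :: "complex^'n"
  assumes nu: "norm u = 1" and nv: "norm v = 1" and g1: "cmod (h u v) < 1"
    and ab: "fA A u \<noteq> fA A v" and t0: "0 \<le> t" and t1: "t \<le> 1"
  shows "\<exists>y. norm y = 1 \<and> fA A y = (1-t) *\<^sub>R fA A u + t *\<^sub>R fA A v \<and>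
     cmod (h x y)^2 \<ge> (1-t) * cmod (h x u)^2 + t * cmod (h x v)^2"
proof -
  define a where "a = fA A u"
  define b where "b = fA A v"
  define g where "g = h u v"
  define m12 where "m12 = h u (A *v v)"
  define m21 where "m21 = h v (A *v u)"
  define \<alpha> where "\<alpha> = h x u"
  define \<beta> where "\<beta> = h x v"
  define K where "K q = (q*m12 + cnj q * m21 - 2 * a * of_real (Re (q*g))) / (b - a)" for q
  have bma: "b - a \<noteq> 0" using ab a_def b_def by simp
  have Klin: "K q = of_real (Re q) * K 1 + of_real (Im q) * K \<i>" for q
  proof -
    have q: "q = of_real (Re q) + \<i> * of_real (Im q)" by (simp add: complex_eq_iff)
    have "Re (q*g) = Re q * Re g - Im q * Im g" by simp
    have "q*m12 + cnj q * m21 - 2 * a * of_real (Re (q*g)) =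
      of_real (Re q) * (m12 + m21 - 2 * a * of_real (Re g)) + of_real (Im q) * (\<i>*m12 - \<i>*m21 - 2*a * of_real (Re (\<i>*g)))"
      apply (subst (1 2) q)
      apply (simp add: algebra_simps)
      done
    note N = this
    have K1: "K 1 = (m12 + m21 - 2 * a * of_real (Re g)) / (b - a)" unfolding K_def by simp
    have KI: "K \<i> = (\<i>*m12 - \<i>*m21 - 2*a * of_real (Re (\<i>*g))) / (b - a)" unfolding K_def by simp
    show ?thesis unfolding K1 KI unfolding K_def N by (simp only: add_divide_distrib times_divide_eq_right)
  qed
  define \<phi>1 where "\<phi>1 = Im (K 1)"
  define \<phi>2 where "\<phi>2 = Im (K \<i>)"
  define dq where "dq = (if \<phi>1 = 0 \<and> \<phi>2 = 0 then 1 else Complex (-\<phi>2) \<phi>1)"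
  have dq0: "dq \<noteq> 0" by (auto simp: dq_def complex_eq_iff)
  have ImK: "Im (K dq) = 0"
    by (subst Klin) (auto simp: dq_def \<phi>1_def \<phi>2_def algebra_simps)
  define ds where "ds = - Re (K dq)"
  define dp where "dp = - ds - 2 * Re (dq * g)"
  have e1: "dp + ds + 2 * Re (dq * g) = 0" by (simp add: dp_def)
  have Kdq: "K dq = - of_real ds" using ImK by (simp add: ds_def complex_eq_iff)
  have e2: "of_real dp * a + of_real ds * b + dq*m12 + cnj dq * m21 = 0"
  proof -
    define R where "R = Re (dq*g)"
    have E: "dq*m12 + cnj dq * m21 = - of_real ds * (b - a) + 2 * a * of_real R"
      using Kdq bma unfolding K_def R_def by (simp add: field_simps)
    have D: "(of_real dp :: complex) = - of_real ds - 2 * of_real R"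
      by (simp add: dp_def R_def)
    have "of_real dp * a + of_real ds * b + dq*m12 + cnj dq * m21
      = (of_real dp :: complex) * a + of_real ds * b + (dq*m12 + cnj dq * m21)" by simp
    also have "\<dots> = 0" unfolding E D by (simp add: algebra_simps)
    finally show ?thesis .
  qed
  have detneg: "dp*ds - (cmod dq)^2 < 0"
  proof -
    have "\<bar>Re (dq * g)\<bar> \<le> cmod dq * cmod g" using abs_Re_le_cmod[of "dq*g"] by (simp add: norm_mult)
    also have "\<dots> < cmod dq" using g1 dq0 g_def by simp
    finally have lt: "\<bar>Re (dq * g)\<bar> < cmod dq" .
    have s: "dp + ds = -2 * Re (dq*g)" using e1 by linarith
    have "(dp+ds)^2 = 4 * (Re (dq*g))^2" unfolding s by (simp only: power_mult_distrib) simp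
    also have "\<dots> < 4 * (cmod dq)^2"
    proof -
      have "\<bar>Re (dq*g)\<bar>^2 < (cmod dq)^2" using lt by (intro power_strict_mono) auto
      then show ?thesis by simp
    qed
    finally have "(dp+ds)^2 < 4 * (cmod dq)^2" .
    moreover have "4*(dp*ds) \<le> (dp+ds)^2" using sum_squares_ge_zero[of "dp-ds" 0]
      by (simp add: power2_eq_square algebra_simps)
    ultimately show ?thesis by linarith
  qed
  define k where "k = dp*ds - (cmod dq)^2"
  define B where "B = (1-t)*ds + t*dp"
  define C where "C = t*(1-t)"
  have k0: "k < 0" using detneg k_def by simp
  have C0: "C \<ge> 0" using t0 t1 by (simp add: C_def)
  define S where "S = sqrt (B^2 - 4*k*C)"
  have disc: "B^2 - 4*k*C \<ge> 0" using k0 C0 by (smt (verit) mult_nonpos_nonneg zero_le_power2)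
  have S2: "S^2 = B^2 - 4*k*C" using disc by (simp add: S_def)
  have SB: "S \<ge> \<bar>B\<bar>"
  proof -
    have "B^2 \<le> S^2" using S2 k0 C0 by (smt (verit) mult_nonpos_nonneg)
    then show ?thesis using S_def real_le_rsqrt by (metis abs_le_square_iff real_sqrt_ge_zero abs_of_nonneg disc)
  qed
  define s1 where "s1 = (-B - S)/(2*k)"
  define s2 where "s2 = (-B + S)/(2*k)"
  have s1p: "s1 \<ge> 0" unfolding s1_def using k0 SB by (intro divide_nonpos_neg) auto
  have s2n: "s2 \<le> 0" unfolding s2_def using k0 SB by (intro divide_nonneg_neg) auto
  have rootgen: "k* s^2 + B* s + C = 0" if "s = (-B + e*S)/(2*k)" "e^2 = 1" for s e
  proof -
    have "4*k*(k* s^2 + B* s + C) = (2*k* s + B)^2 - (B^2 - 4*k*C)" by (simp add: power2_eq_square algebra_simps)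
    also have "2*k* s = -B + e*S" using that k0 by simp
    also have "(-B + e*S + B)^2 - (B^2 - 4*k*C) = 0" using S2 that(2) by (simp add: power_mult_distrib)
    finally show ?thesis using k0 by simp
  qed
  have r1: "k* s1^2 + B* s1 + C = 0" by (rule rootgen[of _ "-1"]) (simp_all add: s1_def)
  have r2: "k* s2^2 + B* s2 + C = 0" by (rule rootgen[of _ "1"]) (simp_all add: s2_def)
  define PD where "PD = dp * (cmod \<alpha>)^2 + ds * (cmod \<beta>)^2 + 2 * Re (dq * cnj \<alpha> * \<beta>)"
  define s0 where "s0 = (if PD \<ge> 0 then s1 else s2)"
  have r0: "k* s0^2 + B* s0 + C = 0" using r1 r2 by (simp add: s0_def)
  have sPD: "s0 * PD \<ge> 0" using s1p s2n by (simp add: s0_def mult_nonpos_nonpos)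
  define p where "p = 1 - t + s0*dp"
  define s' where "s' = t + s0*ds"
  define q where "q = of_real s0 * dq"
  have pq: "p * s' = (cmod q)^2"
  proof -
    have cq: "(cmod q)^2 = s0^2 * (cmod dq)^2" by (simp add: q_def norm_mult power_mult_distrib)
    have "p * s' - (cmod q)^2 = k * s0^2 + B * s0 + C"
      unfolding cq p_def s'_def k_def B_def C_def by (simp add: power2_eq_square algebra_simps)
    then show ?thesis using r0 by simp
  qed
  have N: "p + s' + 2 * Re (q*g) = 1"
  proof -
    have "Re (q*g) = s0 * Re (dq*g)" by (simp add: q_def algebra_simps)
    then have "p + s' + 2 * Re (q*g) = 1 + s0 * (dp + ds + 2 * Re (dq * g))"
      unfolding p_def s'_def by (simp add: algebra_simps)
    then show ?thesis using e1 by simp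
  qed
  have Req: "Re (q*g) \<le> cmod q"
  proof -
    have "Re (q*g) \<le> cmod q * cmod g" using complex_Re_le_cmod[of "q*g"] by (simp add: norm_mult)
    also have "\<dots> \<le> cmod q" using g1 g_def by (simp add: mult_left_le)
    finally show ?thesis .
  qed
  have psq: "p * s' \<le> ((p + s')/2)^2" using sum_squares_ge_zero[of "p - s'" 0]
    by (simp add: power2_eq_square field_simps)
  have p0: "p \<ge> 0"
  proof (rule ccontr)
    assume "\<not> p \<ge> 0"
    then have pn: "p < 0" by simp
    have "p * s' \<ge> 0" using pq by simp
    then have sn: "s' \<le> 0" using pn by (simp add: zero_le_mult_iff)
    have "(cmod q)^2 \<le> (-(p+s')/2)^2" using psq pq by (metis power2_minus minus_divide_left)
    then have "cmod q \<le> -(p+s')/2" by (rule power2_le_imp_le) (use pn sn in simp)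
    then have "2 * cmod q \<le> -(p+s')" by simp
    moreover define R where "R = Re (q*g)"
    ultimately show False using N Req unfolding R_def[symmetric] by linarith
  qed
  have s'0: "s' \<ge> 0"
  proof (cases "p = 0")
    case True
    then have "q = 0" using pq by simp
    then show ?thesis using N True by simp
  next
    case False
    then have "p > 0" using p0 by simp
    moreover have "p * s' \<ge> 0" using pq by simp
    ultimately show ?thesis by (simp add: zero_le_mult_iff)
  qed
  obtain z1 z2 where z1: "(cmod z1)^2 = p" and z2: "(cmod z2)^2 = s'" and z12: "cnj z1 * z2 = q"
  proof (cases "p = 0")
    case True
    then have "q = 0" using pq by simp
    show ?thesis
      by (rule that[of 0 "of_real (sqrt s')"]) (use True \<open>q = 0\<close> s'0 in simp_all)
  next
    case False
    then have pp: "p > 0" using p0 by simp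
    show ?thesis
    proof (rule that[of "of_real (sqrt p)" "q / of_real (sqrt p)"])
      show "(cmod (complex_of_real (sqrt p)))^2 = p" using pp by simp
      show "(cmod (q / complex_of_real (sqrt p)))^2 = s'"
        using pp pq by (simp add: norm_divide power_divide field_simps)
      show "cnj (complex_of_real (sqrt p)) * (q / complex_of_real (sqrt p)) = q" using pp by simp
    qed
  qed
  have z21: "cnj z2 * z1 = cnj q" unfolding z12[symmetric] by (simp add: mult.commute)
  have cz1: "cnj z1 * z1 = of_real p" using z1 cnj_mult_self by metis
  have cz2: "cnj z2 * z2 = of_real s'" using z2 cnj_mult_self by metis
  define y where "y = lin z1 u z2 v"
  have huu: "h u u = 1" using h_self[of u] nu by simp
  have hvv: "h v v = 1" using h_self[of v] nv by simp
  have hvu: "h v u = cnj g" using h_cnj g_def by metis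
  have addcnj: "w + cnj w = of_real (2 * Re w)" for w by (simp add: complex_eq_iff)
  have "h y y = of_real p + (q*g + cnj (q*g)) + of_real s'"
    unfolding y_def hh_lin cz1 cz2 z12 z21 huu hvv hvu g_def[symmetric] by simp
  also have "\<dots> = 1"
  proof -
    have "p + 2 * Re (q*g) + s' = 1" using N by linarith
    then show ?thesis unfolding addcnj by (metis of_real_add of_real_1)
  qed
  finally have "(norm y)^2 = 1" using h_self[of y] by (metis of_real_eq_1_iff)
  then have ny: "norm y = 1" using norm_ge_zero[of y] by (auto simp add: power2_eq_1_iff)
  have fy: "fA A y = (1-t) *\<^sub>R fA A u + t *\<^sub>R fA A v"
  proof -
    have "fA A y = of_real p * a + q * m12 + cnj q * m21 + of_real s' * b"
      unfolding y_def fA_lin cz1 cz2 z12 z21 a_def b_def m12_def m21_def by (simp add: algebra_simps)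
    also have "\<dots> = of_real (1-t) * a + of_real t * b + of_real s0 * (of_real dp * a + of_real ds * b + dq*m12 + cnj dq * m21)"
      unfolding p_def s'_def q_def by (simp add: algebra_simps)
    also have "\<dots> = (1-t) *\<^sub>R a + t *\<^sub>R b" using e2 by (simp add: scaleR_conv_of_real)
    finally show ?thesis by (simp add: a_def b_def)
  qed
  have qy: "(cmod (h x y))^2 = (1-t) * (cmod \<alpha>)^2 + t * (cmod \<beta>)^2 + s0 * PD"
  proof -
    define w where "w = h x y"
    have w: "w = z1 * \<alpha> + z2 * \<beta>" unfolding w_def y_def h_lin_right \<alpha>_def \<beta>_def by simp
    have "w * cnj w = (cnj z1 * z1) * (\<alpha> * cnj \<alpha>) + (cnj z2 * z2) * (\<beta> * cnj \<beta>)
       + ((cnj z1 * z2) * cnj \<alpha> * \<beta> + cnj ((cnj z1 * z2) * cnj \<alpha> * \<beta>))"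
      unfolding w by (simp add: algebra_simps)
    also have "\<dots> = of_real (p * (cmod \<alpha>)^2 + s' * (cmod \<beta>)^2 + 2 * Re (q * cnj \<alpha> * \<beta>))"
      unfolding cz1 cz2 z12 addcnj complex_norm_square[symmetric] by simp
    finally have "(cmod w)^2 = p * (cmod \<alpha>)^2 + s' * (cmod \<beta>)^2 + 2 * Re (q * cnj \<alpha> * \<beta>)"
      using complex_norm_square[of w] by (metis of_real_eq_iff)
    moreover have "Re (q * cnj \<alpha> * \<beta>) = s0 * Re (dq * cnj \<alpha> * \<beta>)"
      by (simp add: q_def algebra_simps)
    ultimately show ?thesis unfolding w_def PD_def p_def s'_def by (simp add: algebra_simps)
  qed
  have "(cmod (h x y))^2 \<ge> (1-t) * (cmod (h x u))^2 + t * (cmod (h x v))^2"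
    using qy sPD unfolding \<alpha>_def \<beta>_def by linarith
  then show ?thesis using ny fy by blast
qed


lemma cvx_le1: "(B::real) \<le> A \<Longrightarrow> 0 \<le> t \<Longrightarrow> (1-t)*A + t*B \<le> A"
proof -
  assume "B \<le> A" "0 \<le> t"
  then have "t*B \<le> t*A" by (rule mult_left_mono)
  then show ?thesis by (simp add: algebra_simps)
qed

lemma cvx_le2: "(A::real) \<le> B \<Longrightarrow> t \<le> 1 \<Longrightarrow> (1-t)*A + t*B \<le> B"
proof -
  assume "A \<le> B" "t \<le> 1"
  then have "(1-t)*A \<le> (1-t)*B" by (intro mult_left_mono) auto
  then show ?thesis by (simp add: algebra_simps)
qed

lemma dep_case:
  fixes A :: "complex^'n^'n" and u v :: "complex^'n"
  assumes nu: "norm u = 1" and nv: "norm v = 1"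
  shows "cmod (h u v) < 1 \<or> fA A u = fA A v"
proof -
  define g where "g = h u v"
  define w where "w = lin 1 v (-g) u"
  have huu: "h u u = 1" using h_self[of u] nu by simp
  have hvv: "h v v = 1" using h_self[of v] nv by simp
  have hvu: "h v u = cnj g" using h_cnj g_def by metis
  have "h w w = 1 - cnj g * g"
    unfolding w_def hh_lin huu hvv hvu g_def[symmetric] by (simp add: algebra_simps)
  then have "of_real ((norm w)^2) = (of_real (1 - (cmod g)^2) :: complex)"
    using h_self[of w] cnj_mult_self[of g] by simp
  then have nw: "(norm w)^2 = 1 - (cmod g)^2" using of_real_eq_iff by blast
  show ?thesis
  proof (cases "cmod g < 1")
    case True then show ?thesis by (simp add: g_def)
  next
    case False
    have "(cmod g)^2 \<le> 1" using nw by (smt (verit) zero_le_power2)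
    then have "cmod g \<le> 1" by (simp add: power_le_one_iff abs_square_le_1)
    then have g1: "cmod g = 1" using False by simp
    then have "norm w = 0" using nw by simp
    then have "w = 0" by simp
    then have "v = lin g u 0 u" unfolding w_def lin_def by (simp add: vec_eq_iff algebra_simps)
    then have "fA A v = cnj g * g * fA A u" by (simp add: fA_lin)
    also have "\<dots> = fA A u" using g1 cnj_mult_self[of g] by simp
    finally show ?thesis by simp
  qed
qed

lemma core:
  fixes A :: "complex^'n^'n" and x u v :: "complex^'n"
  assumes nu: "norm u = 1" and nv: "norm v = 1" and t0: "0 \<le> t" and t1: "t \<le> 1"
  shows "\<exists>y. norm y = 1 \<and> fA A y = (1-t) *\<^sub>R fA A u + t *\<^sub>R fA A v \<and>
     cmod (h x y)^2 \<ge> (1-t) * cmod (h x u)^2 + t * cmod (h x v)^2"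
proof (cases "fA A u = fA A v")
  case True
  have tgt: "(1-t) *\<^sub>R fA A u + t *\<^sub>R fA A v = fA A u" "(1-t) *\<^sub>R fA A u + t *\<^sub>R fA A v = fA A v"
    using True by (simp_all add: scaleR_left_distrib[symmetric])
  show ?thesis
  proof (cases "cmod (h x u) \<ge> cmod (h x v)")
    case True
    then have "(cmod (h x v))^2 \<le> (cmod (h x u))^2" by (simp add: power_mono)
    then have "(1-t) * cmod (h x u)^2 + t * cmod (h x v)^2 \<le> cmod (h x u)^2"
      using t0 by (rule cvx_le1)
    then show ?thesis using nu tgt by (intro exI[of _ u]) simp
  next
    case False
    then have "(cmod (h x u))^2 \<le> (cmod (h x v))^2" by (simp add: power_mono)
    then have "(1-t) * cmod (h x u)^2 + t * cmod (h x v)^2 \<le> cmod (h x v)^2"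
      using t1 by (rule cvx_le2)
    then show ?thesis using nv tgt by (intro exI[of _ v]) simp
  qed
next
  case False
  then have "cmod (h u v) < 1" using dep_case[OF nu nv, of A] by blast
  then show ?thesis using core_indep[OF nu nv _ False t0 t1] by blast
qed


lemma cvx_gt: "(A::real) > c \<Longrightarrow> B > c \<Longrightarrow> 0 \<le> t \<Longrightarrow> t \<le> 1 \<Longrightarrow> (1-t)*A + t*B > c"
proof -
  assume a: "A > c" "B > c" "0 \<le> t" "t \<le> 1"
  have "(1-t)*(A-c) + t*(B-c) > 0"
  proof (cases "t = 0")
    case True then show ?thesis using a by simp
  next
    case False
    then have "t*(B-c) > 0" using a by simp
    moreover have "(1-t)*(A-c) \<ge> 0" using a by simp
    ultimately show ?thesis by linarith
  qed
  then show ?thesis by (simp add: algebra_simps)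
qed

lemma in_ball_iff_h:
  fixes x y :: "complex^'n"
  assumes "norm x = 1" "norm y = 1" "r > 0"
  shows "y \<in> ball x r \<longleftrightarrow> Re (h x y) > 1 - r^2/2"
proof -
  have d: "y \<in> ball x r \<longleftrightarrow> norm (x - y) < r" by (simp add: dist_norm)
  have e: "norm (x - y) < r \<longleftrightarrow> (norm (x - y))^2 < r^2"
  proof
    assume "norm (x - y) < r"
    then show "(norm (x - y))^2 < r^2" using norm_ge_zero[of "x-y"] by (rule power_strict_mono) simp
  next
    assume "(norm (x - y))^2 < r^2"
    then show "norm (x - y) < r" using assms(3) by (rule power2_less_imp_less[OF _ less_imp_le])
  qed
  have f: "(norm (x - y))^2 = 2 - 2 * Re (h x y)" using assms(1,2) by (simp add: normsq_diff)
  show ?thesis unfolding d e f by linarith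
qed

theorem lemma2:
  fixes A :: "complex ^ 'n ^ 'n" and x :: "complex ^ 'n" and r :: real
  assumes "x \<in> csphere" and "r > 0"
  shows "convex (fA A ` (csphere \<inter> ball x r))"
  unfolding convex_alt
proof (intro ballI allI impI)
  fix w1 w2 :: complex and t :: real
  assume w1: "w1 \<in> fA A ` (csphere \<inter> ball x r)" and w2: "w2 \<in> fA A ` (csphere \<inter> ball x r)"
    and t: "0 \<le> t \<and> t \<le> 1"
  have nx: "norm x = 1" using assms(1) by (simp add: csphere_def)
  obtain u where u: "u \<in> csphere" "u \<in> ball x r" and w1u: "w1 = fA A u" using w1 by blast
  obtain v where v: "v \<in> csphere" "v \<in> ball x r" and w2v: "w2 = fA A v" using w2 by blast
  have nu: "norm u = 1" and nv: "norm v = 1" using u v by (simp_all add: csphere_def)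
  define c where "c = 1 - r^2/2"
  have cu: "cmod (h x u) > c"
    using in_ball_iff_h[OF nx nu assms(2)] u(2) complex_Re_le_cmod[of "h x u"] c_def by linarith
  have cv: "cmod (h x v) > c"
    using in_ball_iff_h[OF nx nv assms(2)] v(2) complex_Re_le_cmod[of "h x v"] c_def by linarith
  obtain y where ny: "norm y = 1" and fy: "fA A y = (1-t) *\<^sub>R fA A u + t *\<^sub>R fA A v"
    and qy: "cmod (h x y)^2 \<ge> (1-t) * cmod (h x u)^2 + t * cmod (h x v)^2"
    using core[OF nu nv, of t A x] t by blast
  have cy: "cmod (h x y) > c"
  proof (cases "c < 0")
    case True then show ?thesis using norm_ge_zero[of "h x y"] by linarith
  next
    case False
    then have "(cmod (h x u))^2 > c^2" "(cmod (h x v))^2 > c^2" using cu cv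
      by (simp_all add: power_strict_mono)
    then have "(1-t) * cmod (h x u)^2 + t * cmod (h x v)^2 > c^2" using t by (intro cvx_gt) auto
    then have "(cmod (h x y))^2 > c^2" using qy by linarith
    then show ?thesis using False by (simp add: power_less_imp_less_base)
  qed
  define \<mu> where "\<mu> = (if h x y = 0 then 1 else cnj (h x y) / of_real (cmod (h x y)))"
  have m1: "cnj \<mu> * \<mu> = 1"
  proof -
    have "cmod \<mu> = 1" by (simp add: \<mu>_def norm_divide)
    then show ?thesis using cnj_mult_self[of \<mu>] by simp
  qed
  have hmu: "\<mu> * h x y = of_real (cmod (h x y))"
  proof (cases "h x y = 0")
    case True then show ?thesis by (simp add: \<mu>_def)
  next
    case False
    have e: "cnj (h x y) * h x y = of_real (cmod (h x y)) * of_real (cmod (h x y))"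
      by (metis cnj_mult_self of_real_mult power2_eq_square)
    show ?thesis using False e by (simp add: \<mu>_def mult.commute)
  qed
  define y' where "y' = lin \<mu> y 0 y"
  have fy': "fA A y' = fA A y" unfolding y'_def fA_lin using m1 by simp
  have "h y' y' = h y y" unfolding y'_def hh_lin using m1 by simp
  then have "of_real ((norm y')^2) = (of_real ((norm y)^2) :: complex)" by (simp add: h_self)
  then have "(norm y')^2 = (norm y)^2" by (simp only: of_real_eq_iff)
  then have "(norm y')^2 = 1" using ny by simp
  then have ny': "norm y' = 1" using norm_ge_zero[of y'] by (auto simp add: power2_eq_1_iff)
  have "h x y' = of_real (cmod (h x y))" unfolding y'_def h_lin_right using hmu by simp
  then have "Re (h x y') > c" using cy by simp
  then have "y' \<in> ball x r" using in_ball_iff_h[OF nx ny' assms(2)] c_def by simp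
  have "y' \<in> csphere" using ny' by (simp add: csphere_def)
  show "(1 - t) *\<^sub>R w1 + t *\<^sub>R w2 \<in> fA A ` (csphere \<inter> ball x r)"
  proof (rule image_eqI)
    show "(1 - t) *\<^sub>R w1 + t *\<^sub>R w2 = fA A y'" using fy fy' w1u w2v by simp
    show "y' \<in> csphere \<inter> ball x r" using \<open>y' \<in> ball x r\<close> \<open>y' \<in> csphere\<close> by simp
  qed
qed

end
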